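(* Let $N,d\ge1$, $T>0$, $n\ge 2$, and let $x^n=(x^n_1,\dots,x^n_N)$, $v^n=\dot x^n$ be the solution on $[0,T]$ of the system $\dot x^n_i=v^n_i$, $\dot v^n_i=\frac1N\sum_{k=1}^N(v^n_k-v^n_i)\psi_n(|x^n_i-x^n_k|)$, $i=1,\dots,N$, with initial data $x^n(0),v^n(0)$. Then: 1. $x^n$ is $C^\infty$ in a neighborhood of every time $t$ such that $|x^n_i(t)-x^n_j(t)|>0$ for all $i\ne j$. 2. The average velocity $\frac1N\sum_{i=1}^N v^n_i(t)$ is constant in $t$. 3. There is a constant $M(n)$ with $\|v^n_i\|_{L^\infty([0,T])}\le M(n)$ for all $i$. 4. If the initial data $x^n(0),v^n(0)$ are bounded uniformly in $n$, then there is a constant $M$ independent of $n$ with $\|v^n_i\|_{L^\infty([0,T])}\le M$ for all $i$ and all $n$. 5. $|\dot v^n_i|\le 2M(n)n$. 6. If for some $t$ and some $i,j$ we have $x^n_i(t)=x^n_j(t)$ and $v^n_i(t)=v^n_j(t)$, then $x^n_i\equiv x^n_j$ on $[t,T]$. 7. If at some time $t$ we have $v^n_i(t)=v^n_j(t)$ for all $i,j$, then $v^n$ is constant on $[t,T]$.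
   Context: Let $\alpha\in(0,1)$ and $\psi(s)=s^{-\alpha}$ for $s>0$, $\psi(0)=0$. For each $n$, $\psi_n:[0,\infty)\to[0,\infty)$ is defined by $\psi_n(s)=\psi(s)$ for $s\ge (n-1)^{-1/\alpha}$, $\psi_n(s)=n$ for $s\le n^{-1/\alpha}$, and $\psi_n$ smooth and monotone on $[n^{-1/\alpha},(n-1)^{-1/\alpha}]$. For such smooth bounded weights the system has a unique global classical $C^2$ solution. *)

theory Defs
  imports "HOL-Analysis.Analysis"
begin

definition psi :: "real \<Rightarrow> real \<Rightarrow> real" where
  "psi \<alpha> s = (if s > 0 then s powr (-\<alpha>) else 0)"

text \<open>C-infinity on a set S (derivatives taken within S, so relative neighbourhoods
  at boundary points are allowed).\<close>
definition C_inf_on :: "real set \<Rightarrow> (real \<Rightarrow> 'a::real_normed_vector) \<Rightarrow> bool" where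
  "C_inf_on S f \<longleftrightarrow> (\<exists>D. D 0 = f \<and>
      (\<forall>k. \<forall>t\<in>S. (D k has_vector_derivative D (Suc k) t) (at t within S)))"

definition psi_trunc :: "real \<Rightarrow> nat \<Rightarrow> (real \<Rightarrow> real) \<Rightarrow> bool" where
  "psi_trunc \<alpha> n p \<longleftrightarrow>
     (\<forall>s. real (n - 1) powr (-1/\<alpha>) \<le> s \<longrightarrow> p s = psi \<alpha> s) \<and>
     (\<forall>s. 0 \<le> s \<and> s \<le> real n powr (-1/\<alpha>) \<longrightarrow> p s = real n) \<and>
     (\<forall>s\<ge>0. p s \<ge> 0) \<and>
     C_inf_on {0<..} p \<and>
     (monotone_on {real n powr (-1/\<alpha>) .. real (n - 1) powr (-1/\<alpha>)} (\<le>) (\<le>) p \<or>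
      monotone_on {real n powr (-1/\<alpha>) .. real (n - 1) powr (-1/\<alpha>)} (\<le>) (\<ge>) p)"

definition CS_solution ::
  "nat \<Rightarrow> (real \<Rightarrow> real) \<Rightarrow> real \<Rightarrow> (nat \<Rightarrow> real \<Rightarrow> real^'d) \<Rightarrow> (nat \<Rightarrow> real \<Rightarrow> real^'d) \<Rightarrow> bool"
  where
  "CS_solution N p T x v \<longleftrightarrow>
     (\<forall>i<N. \<forall>t\<in>{0..T}.
        (x i has_vector_derivative v i t) (at t within {0..T}) \<and>
        (v i has_vector_derivative
            ((1 / real N) *\<^sub>R (\<Sum>k<N. p (norm (x i t - x k t)) *\<^sub>R (v k t - v i t))))
          (at t within {0..T}))"

end

theory Submission
  imports Defs
begin

fun Ck :: "nat \<Rightarrow> real set \<Rightarrow> (real \<Rightarrow> 'a::real_normed_vector) \<Rightarrow> bool" where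
  "Ck 0 S f = True"
| "Ck (Suc k) S f = (\<exists>g. (\<forall>t\<in>S. (f has_vector_derivative g t) (at t within S)) \<and> Ck k S g)"

lemma Ck_Suc_imp: "Ck (Suc k) S f \<Longrightarrow> Ck k S f"
proof (induction k arbitrary: f)
  case 0 then show ?case by simp
next
  case (Suc k)
  then obtain g where "\<forall>t\<in>S. (f has_vector_derivative g t) (at t within S)" "Ck (Suc k) S g" by auto
  with Suc.IH show ?case by auto
qed

lemma Ck_cong: "Ck k S f \<Longrightarrow> (\<And>t. t \<in> S \<Longrightarrow> f t = h t) \<Longrightarrow> Ck k S h"
proof (cases k)
  case (Suc m)
  assume "Ck k S f" "\<And>t. t \<in> S \<Longrightarrow> f t = h t"
  then obtain g where g: "\<forall>t\<in>S. (f has_vector_derivative g t) (at t within S)" "Ck m S g"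
    using Suc by auto
  have "\<forall>t\<in>S. (h has_vector_derivative g t) (at t within S)"
  proof
    fix t assume "t \<in> S"
    show "(h has_vector_derivative g t) (at t within S)"
      by (rule has_vector_derivative_transform_within[OF g(1)[rule_format, OF \<open>t\<in>S\<close>] zero_less_one \<open>t\<in>S\<close>])
         (use \<open>\<And>t. t \<in> S \<Longrightarrow> f t = h t\<close> in auto)
  qed
  with g Suc show ?thesis by auto
qed simp

lemma Ck_const: "Ck k S (\<lambda>t. c)"
proof (induction k arbitrary: c)
  case (Suc k) then show ?case by (auto intro!: exI[of _ "\<lambda>t. 0"])
qed simp

lemma Ck_add: "Ck k S f \<Longrightarrow> Ck k S g \<Longrightarrow> Ck k S (\<lambda>t. f t + g t)"
proof (induction k arbitrary: f g)
  case (Suc k)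
  then obtain f' g' where "\<forall>t\<in>S. (f has_vector_derivative f' t) (at t within S)" "Ck k S f'"
     "\<forall>t\<in>S. (g has_vector_derivative g' t) (at t within S)" "Ck k S g'" by auto
  with Suc.IH[of f' g'] show ?case
    by (auto intro!: exI[of _ "\<lambda>t. f' t + g' t"] has_vector_derivative_add)
qed simp

lemma Ck_scaleR: "Ck k S (a::real\<Rightarrow>real) \<Longrightarrow> Ck k S f \<Longrightarrow> Ck k S (\<lambda>t. a t *\<^sub>R f t)"
proof (induction k arbitrary: a f)
  case (Suc k)
  then obtain a' f' where a': "\<forall>t\<in>S. (a has_vector_derivative a' t) (at t within S)" "Ck k S a'"
     and f': "\<forall>t\<in>S. (f has_vector_derivative f' t) (at t within S)" "Ck k S f'" by auto
  have ak: "Ck k S a" and fk: "Ck k S f" using Suc.prems Ck_Suc_imp by blast+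
  have "Ck k S (\<lambda>t. a t *\<^sub>R f' t + a' t *\<^sub>R f t)"
    by (rule Ck_add) (use Suc.IH ak fk a' f' in auto)
  moreover have "\<forall>t\<in>S. ((\<lambda>t. a t *\<^sub>R f t) has_vector_derivative (a t *\<^sub>R f' t + a' t *\<^sub>R f t)) (at t within S)"
    using a' f' by (auto intro!: has_vector_derivative_scaleR simp: has_real_derivative_iff_has_vector_derivative)
  ultimately show ?case by auto
qed simp

lemma Ck_inner: "Ck k S (f::real \<Rightarrow> 'a::real_inner) \<Longrightarrow> Ck k S g \<Longrightarrow> Ck k S (\<lambda>t. inner (f t) (g t))"
proof (induction k arbitrary: f g)
  case (Suc k)
  then obtain f' g' where f': "\<forall>t\<in>S. (f has_vector_derivative f' t) (at t within S)" "Ck k S f'"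
     and g': "\<forall>t\<in>S. (g has_vector_derivative g' t) (at t within S)" "Ck k S g'" by auto
  have fk: "Ck k S f" and gk: "Ck k S g" using Suc.prems Ck_Suc_imp by blast+
  have "Ck k S (\<lambda>t. inner (f t) (g' t) + inner (f' t) (g t))"
    by (rule Ck_add) (use Suc.IH fk gk f' g' in auto)
  moreover have "\<forall>t\<in>S. ((\<lambda>t. inner (f t) (g t)) has_vector_derivative (inner (f t) (g' t) + inner (f' t) (g t))) (at t within S)"
    using f' g' by (auto intro!: bounded_bilinear.has_vector_derivative[OF bounded_bilinear_inner])
  ultimately show ?case by auto
qed simp

lemma Ck_neg: "Ck k S f \<Longrightarrow> Ck k S (\<lambda>t. - f t)"
  using Ck_scaleR[OF Ck_const[of k S "-1"], of f] by simp

lemma Ck_diff: "Ck k S f \<Longrightarrow> Ck k S g \<Longrightarrow> Ck k S (\<lambda>t. f t - g t)"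
  using Ck_add[of k S f "\<lambda>t. - g t"] Ck_neg[of k S g] by simp

lemma Ck_sum: "finite I \<Longrightarrow> (\<And>i. i \<in> I \<Longrightarrow> Ck k S (f i)) \<Longrightarrow> Ck k S (\<lambda>t. \<Sum>i\<in>I. f i t)"
proof (induction I rule: finite_induct)
  case empty then show ?case using Ck_const[of k S 0] by simp
next
  case (insert j I) then show ?case using Ck_add[of k S "f j" "\<lambda>t. \<Sum>i\<in>I. f i t"] by simp
qed

definition smooth_real :: "real set \<Rightarrow> (real \<Rightarrow> real) \<Rightarrow> bool" where
  "smooth_real U q \<longleftrightarrow> (\<exists>D. D 0 = q \<and> (\<forall>k. \<forall>s\<in>U. (D k has_real_derivative D (Suc k) s) (at s)))"

lemma Ck_comp:
  assumes "Ck k S r" "\<And>t. t \<in> S \<Longrightarrow> r t \<in> U" "\<forall>k. \<forall>s\<in>U. (D k has_real_derivative D (Suc k) s) (at s)"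
  shows "Ck k S (\<lambda>t. D 0 (r t))"
  using assms
proof (induction k arbitrary: r D)
  case (Suc k)
  then obtain r' where r': "\<forall>t\<in>S. (r has_vector_derivative r' t) (at t within S)" "Ck k S r'" by auto
  have rk: "Ck k S r" using Suc.prems Ck_Suc_imp by blast
  have "Ck k S (\<lambda>t. (\<lambda>j. D (Suc j)) 0 (r t))"
    by (rule Suc.IH[OF rk Suc.prems(2)]) (use Suc.prems(3) in auto)
  then have "Ck k S (\<lambda>t. D 1 (r t) *\<^sub>R r' t)"
    using Ck_scaleR r'(2) by fastforce
  moreover have "\<forall>t\<in>S. ((\<lambda>t. D 0 (r t)) has_vector_derivative (D 1 (r t) *\<^sub>R r' t)) (at t within S)"
  proof
    fix t assume t: "t \<in> S"
    have "((\<lambda>t. D 0 (r t)) has_field_derivative D 1 (r t) * r' t) (at t within S)"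
      by (rule DERIV_chain2) (use Suc.prems(2,3) r'(1) t in \<open>auto simp: has_real_derivative_iff_has_vector_derivative\<close>)
    then show "((\<lambda>t. D 0 (r t)) has_vector_derivative (D 1 (r t) *\<^sub>R r' t)) (at t within S)"
      by (simp add: has_real_derivative_iff_has_vector_derivative)
  qed
  ultimately show ?case by auto
qed simp

lemma Ck_all_imp_C_inf:
  assumes nb: "\<And>t. t \<in> S \<Longrightarrow> at t within S \<noteq> bot" and all: "\<forall>k. Ck k S f"
  shows "C_inf_on S f"
proof -
  have ex: "\<exists>h. (\<forall>t\<in>S. (g has_vector_derivative h t) (at t within S)) \<and> (\<forall>m. Ck m S h)"
    if gall: "\<forall>m. Ck m S g" for g :: "real \<Rightarrow> 'a"
  proof -
    obtain h0 where h0: "\<forall>t\<in>S. (g has_vector_derivative h0 t) (at t within S)"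
      using spec[OF gall, of "Suc 0"] by auto
    have "Ck m S h0" for m
    proof -
      obtain hm where hm: "\<forall>t\<in>S. (g has_vector_derivative hm t) (at t within S)" "Ck m S hm"
        using spec[OF gall, of "Suc m"] by auto
      show ?thesis
        by (rule Ck_cong[OF hm(2)]) (use vector_derivative_unique_within nb hm(1) h0 in blast)
    qed
    with h0 show ?thesis by blast
  qed
  define step where "step = (\<lambda>g::real \<Rightarrow> 'a. SOME h. (\<forall>t\<in>S. (g has_vector_derivative h t) (at t within S)) \<and> (\<forall>m. Ck m S h))"
  have st: "(\<forall>t\<in>S. (g has_vector_derivative step g t) (at t within S)) \<and> (\<forall>m. Ck m S (step g))"
    if "\<forall>m. Ck m S g" for g
    unfolding step_def by (rule someI_ex[OF ex[OF that]])
  define D where "D k = (step ^^ k) f" for k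
  have DC: "\<forall>m. Ck m S (D k)" for k
    by (induction k) (use all st in \<open>auto simp: D_def\<close>)
  show ?thesis unfolding C_inf_on_def
    by (rule exI[of _ D]) (use st DC in \<open>auto simp: D_def\<close>)
qed

lemma deriv_nonpos_mono:
  fixes f :: "real \<Rightarrow> real"
  assumes "\<And>t. t \<in> {a..b} \<Longrightarrow> (f has_real_derivative f' t) (at t within {a..b})"
    and "\<And>t. t \<in> {a..b} \<Longrightarrow> f' t \<le> 0"
    and "a \<le> c" "c \<le> d" "d \<le> b"
  shows "f d \<le> f c"
proof -
  have "\<exists>y\<in>{c..d}. f d - f c = (\<lambda>h. h * f' y) (d - c)"
  proof (rule mvt_very_simple[OF \<open>c \<le> d\<close>])
    fix y assume "c \<le> y" "y \<le> d"
    then have "(f has_real_derivative f' y) (at y within {a..b})" using assms by auto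
    then have "(f has_real_derivative f' y) (at y within {c..d})"
      by (rule has_field_derivative_subset) (use assms in auto)
    then show "(f has_derivative (\<lambda>h. h * f' y)) (at y within {c..d})"
      unfolding has_field_derivative_def by (metis (no_types, lifting) ext mult.commute)
  qed
  then obtain y where "y \<in> {c..d}" "f d - f c = (d - c) * f' y" by auto
  moreover have "f' y \<le> 0" using assms \<open>y \<in> {c..d}\<close> by auto
  ultimately show ?thesis using \<open>c \<le> d\<close> mult_nonneg_nonpos[of "d - c" "f' y"] by simp
qed

locale cs =
  fixes N :: nat and p :: "real \<Rightarrow> real" and T :: real and x v :: "nat \<Rightarrow> real \<Rightarrow> real^'d"
  assumes sol: "CS_solution N p T x v" and Tpos: "T > 0" and Npos: "N \<ge> 1"
    and pnn: "\<And>s. s \<ge> 0 \<Longrightarrow> p s \<ge> 0"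
begin

definition F :: "nat \<Rightarrow> real \<Rightarrow> real^'d" where
  "F i t = (1 / real N) *\<^sub>R (\<Sum>k<N. p (norm (x i t - x k t)) *\<^sub>R (v k t - v i t))"

lemma dx: "i < N \<Longrightarrow> t \<in> {0..T} \<Longrightarrow> (x i has_vector_derivative v i t) (at t within {0..T})"
  using sol unfolding CS_solution_def by auto

lemma dv: "i < N \<Longrightarrow> t \<in> {0..T} \<Longrightarrow> (v i has_vector_derivative F i t) (at t within {0..T})"
  using sol unfolding CS_solution_def F_def by auto

lemma sum_F: "(\<Sum>i<N. F i t) = 0"
proof -
  define g where "g i k = p (norm (x i t - x k t)) *\<^sub>R (v k t - v i t)" for i k
  have gs: "g k i = - g i k" for i k
    unfolding g_def by (simp add: norm_minus_commute scaleR_diff_right)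
  have "(\<Sum>i<N. \<Sum>k<N. g i k) = (\<Sum>k<N. \<Sum>i<N. g i k)" by (rule sum.swap)
  also have "\<dots> = (\<Sum>k<N. \<Sum>i<N. - g k i)" by (intro sum.cong refl) (rule gs)
  also have "\<dots> = - (\<Sum>k<N. \<Sum>i<N. g k i)" by (simp add: sum_negf)
  finally have X: "(\<Sum>i<N. \<Sum>k<N. g i k) = - (\<Sum>i<N. \<Sum>k<N. g i k)" .
  have "(2::real) *\<^sub>R (\<Sum>i<N. \<Sum>k<N. g i k) = (\<Sum>i<N. \<Sum>k<N. g i k) + - (\<Sum>i<N. \<Sum>k<N. g i k)"
    by (subst X[symmetric]) (simp add: scaleR_2)
  then have "(\<Sum>i<N. \<Sum>k<N. g i k) = 0" by simp
  moreover have "(\<Sum>i<N. F i t) = (1 / real N) *\<^sub>R (\<Sum>i<N. \<Sum>k<N. g i k)"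
    unfolding F_def g_def by (simp add: scaleR_sum_right)
  ultimately show ?thesis by simp
qed

lemma avg_const: "t \<in> {0..T} \<Longrightarrow> (\<Sum>i<N. v i t) = (\<Sum>i<N. v i 0)"
proof -
  have "\<forall>s\<in>{0..T}. ((\<lambda>s. \<Sum>i<N. v i s) has_derivative (\<lambda>h. 0)) (at s within {0..T})"
  proof
    fix s assume s: "s \<in> {0..T}"
    have "((\<lambda>s. \<Sum>i<N. v i s) has_vector_derivative (\<Sum>i<N. F i s)) (at s within {0..T})"
      by (rule has_vector_derivative_sum) (use dv s in auto)
    then show "((\<lambda>s. \<Sum>i<N. v i s) has_derivative (\<lambda>h. 0)) (at s within {0..T})"
      by (simp add: sum_F has_vector_derivative_def)
  qed
  then obtain c where "\<forall>s\<in>{0..T}. (\<Sum>i<N. v i s) = c"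
    using has_derivative_zero_constant[of "{0..T}"] by (metis convex_real_interval(5))
  moreover assume "t \<in> {0..T}"
  ultimately show ?thesis using Tpos by auto
qed

definition E :: "real \<Rightarrow> real" where "E t = (\<Sum>i<N. inner (v i t) (v i t))"


lemma sum_vF_nonpos: "(\<Sum>i<N. inner (v i t) (F i t)) \<le> 0"
proof -
  define h where "h i k = p (norm (x i t - x k t)) * inner (v i t) (v k t - v i t)" for i k
  have hs: "h i k + h k i \<le> 0" for i k
  proof -
    have nc: "norm (x k t - x i t) = norm (x i t - x k t)" by (rule norm_minus_commute)
    have "h i k + h k i = - p (norm (x i t - x k t)) * inner (v k t - v i t) (v k t - v i t)"
      unfolding h_def nc by (simp add: inner_diff_left inner_diff_right inner_commute[of "v k t" "v i t"] algebra_simps)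
    also have "\<dots> \<le> 0" using pnn[of "norm (x i t - x k t)"] by (simp add: mult_nonneg_nonneg)
    finally show ?thesis .
  qed
  have "(\<Sum>i<N. \<Sum>k<N. h i k) = (\<Sum>i<N. \<Sum>k<N. h k i)" by (rule sum.swap)
  then have "2 * (\<Sum>i<N. \<Sum>k<N. h i k) = (\<Sum>i<N. \<Sum>k<N. h i k + h k i)"
    by (simp add: sum.distrib)
  also have "\<dots> \<le> 0" by (intro sum_nonpos hs)
  finally have "(\<Sum>i<N. \<Sum>k<N. h i k) \<le> 0" by simp
  moreover have "(\<Sum>i<N. inner (v i t) (F i t)) = (1 / real N) * (\<Sum>i<N. \<Sum>k<N. h i k)"
    unfolding F_def h_def by (simp add: inner_sum_right sum_distrib_left)
  ultimately show ?thesis by (simp add: divide_nonpos_nonneg)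
qed

lemma E_mono: "0 \<le> a \<Longrightarrow> a \<le> b \<Longrightarrow> b \<le> T \<Longrightarrow> E b \<le> E a"
proof (rule deriv_nonpos_mono[of 0 T E "\<lambda>t. 2 * (\<Sum>i<N. inner (v i t) (F i t))"])
  fix t assume t: "t \<in> {0..T}"
  have "(E has_vector_derivative (\<Sum>i<N. inner (v i t) (F i t) + inner (F i t) (v i t))) (at t within {0..T})"
    unfolding E_def
    by (rule has_vector_derivative_sum, rule bounded_bilinear.has_vector_derivative[OF bounded_bilinear_inner])
       (use dv t in auto)
  moreover have "\<And>i. inner (F i t) (v i t) = inner (v i t) (F i t)" by (rule inner_commute)
  ultimately show "(E has_real_derivative 2 * (\<Sum>i<N. inner (v i t) (F i t))) (at t within {0..T})"
    by (simp add: has_real_derivative_iff_has_vector_derivative sum.distrib sum_distrib_left)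
next
  fix t show "2 * (\<Sum>i<N. inner (v i t) (F i t)) \<le> 0" using sum_vF_nonpos[of t] by simp
qed

lemma v_bound: "i < N \<Longrightarrow> t \<in> {0..T} \<Longrightarrow> norm (v i t) \<le> sqrt (E 0)"
proof -
  assume i: "i < N" and t: "t \<in> {0..T}"
  have "norm (v i t) ^ 2 = inner (v i t) (v i t)" by (simp add: power2_norm_eq_inner)
  also have "\<dots> \<le> E t" unfolding E_def
    by (rule member_le_sum[of i "{..<N}" "\<lambda>i. inner (v i t) (v i t)"]) (use i in auto)
  also have "\<dots> \<le> E 0" using E_mono[of 0 t] t by auto
  finally show ?thesis by (simp add: real_le_rsqrt)
qed

lemma E0_bound: "(\<And>i. i < N \<Longrightarrow> norm (v i 0) \<le> B) \<Longrightarrow> E 0 \<le> real N * B^2"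
proof -
  assume B: "\<And>i. i < N \<Longrightarrow> norm (v i 0) \<le> B"
  have "E 0 = (\<Sum>i<N. norm (v i 0) ^ 2)" unfolding E_def by (simp add: power2_norm_eq_inner)
  also have "\<dots> \<le> (\<Sum>i<N. B ^ 2)"
    by (intro sum_mono power_mono) (use B in auto)
  finally show ?thesis by simp
qed

lemma F_bound:
  assumes pK: "\<And>s. s \<ge> 0 \<Longrightarrow> p s \<le> K" and vM: "\<And>k. k < N \<Longrightarrow> norm (v k t) \<le> M" and i: "i < N"
  shows "norm (F i t) \<le> 2 * M * K"
proof -
  have "norm (\<Sum>k<N. p (norm (x i t - x k t)) *\<^sub>R (v k t - v i t)) \<le> (\<Sum>k<N. K * (2 * M))"
  proof (rule order.trans[OF norm_sum], rule sum_mono)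
    fix k assume k: "k \<in> {..<N}"
    have "norm (v k t - v i t) \<le> 2 * M"
      using norm_triangle_ineq4[of "v k t" "v i t"] vM[of k] vM[OF i] k by auto
    moreover have "0 \<le> p (norm (x i t - x k t))" "p (norm (x i t - x k t)) \<le> K" using pnn pK by auto
    ultimately show "norm (p (norm (x i t - x k t)) *\<^sub>R (v k t - v i t)) \<le> K * (2 * M)"
      by (simp add: mult_mono)
  qed
  then show ?thesis unfolding F_def using Npos by (simp add: field_simps)
qed

lemma flock:
  assumes t: "t \<in> {0..T}" and eq: "\<And>i j. i < N \<Longrightarrow> j < N \<Longrightarrow> v i t = v j t"
    and s: "s \<in> {t..T}" and i: "i < N"
  shows "v i s = v i t"
proof -
  define w where "w = v 0 t"
  have vw: "k < N \<Longrightarrow> v k t = w" for k unfolding w_def using eq[of k 0] Npos by auto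
  have s0: "s \<in> {0..T}" using s t by auto
  have "(\<Sum>k<N. v k t) = (\<Sum>k<N. w)" by (rule sum.cong) (auto simp: vw)
  also have "\<dots> = real N *\<^sub>R w" by (simp only: sum_constant_scaleR card_lessThan)
  finally have sumeq: "(\<Sum>k<N. v k s) = real N *\<^sub>R w"
    using avg_const[OF s0] avg_const[OF t] by simp
  have Et: "E t = real N * inner w w" unfolding E_def using vw by simp
  have Es: "E s \<le> E t" using E_mono[of t s] s t by auto
  have trm: "inner (v k s - w) (v k s - w) = inner (v k s) (v k s) - 2 * inner (v k s) w + inner w w" for k
    by (simp add: inner_diff_left inner_diff_right inner_commute[of w "v k s"])
  have "(\<Sum>k<N. inner (v k s - w) (v k s - w)) = E s - 2 * inner (\<Sum>k<N. v k s) w + real N * inner w w"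
    unfolding E_def trm by (simp add: sum_subtractf inner_sum_left sum.distrib sum_distrib_left)
  also have "\<dots> \<le> 0" using Es Et sumeq by simp
  finally have "(\<Sum>k<N. inner (v k s - w) (v k s - w)) \<le> 0" .
  moreover have "inner (v i s - w) (v i s - w) \<le> (\<Sum>k<N. inner (v k s - w) (v k s - w))"
    by (rule member_le_sum[of i "{..<N}" "\<lambda>k. inner (v k s - w) (v k s - w)"]) (use i in auto)
  ultimately have "inner (v i s - w) (v i s - w) \<le> 0" by linarith
  then have "v i s - w = 0" using inner_ge_zero[of "v i s - w"] inner_eq_zero_iff by (metis order.antisym)
  then have "v i s = w" by simp
  then show ?thesis using vw i by simp
qed

end

lemma smooth_half_powr: "\<forall>k. \<forall>s\<in>{0<..}. ((\<lambda>s. (\<Prod>j<k. 1/2 - real j) * s powr (1/2 - real k)) has_real_derivative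
   (\<lambda>s. (\<Prod>j<Suc k. 1/2 - real j) * s powr (1/2 - real (Suc k))) s) (at s)"
proof (intro allI ballI)
  fix k and s :: real assume s: "s \<in> {0<..}"
  have "((\<lambda>s. (\<Prod>j<k. 1/2 - real j) * s powr (1/2 - real k)) has_real_derivative
     (\<Prod>j<k. 1/2 - real j) * ((1/2 - real k) * s powr (1/2 - real k - 1))) (at s)"
    by (intro DERIV_cmult has_real_derivative_powr) (use s in auto)
  then show "((\<lambda>s. (\<Prod>j<k. 1/2 - real j) * s powr (1/2 - real k)) has_real_derivative
   (\<lambda>s. (\<Prod>j<Suc k. 1/2 - real j) * s powr (1/2 - real (Suc k))) s) (at s)"
    by (simp add: algebra_simps diff_diff_eq)
qed

context cs begin

lemma Ck_F:
  assumes ps: "smooth_real {0<..} p"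
    and nc: "\<And>s i j. s \<in> S \<Longrightarrow> i < N \<Longrightarrow> j < N \<Longrightarrow> i \<noteq> j \<Longrightarrow> norm (x i s - x j s) > 0"
    and IH: "\<And>j. j < N \<Longrightarrow> Ck k S (x j) \<and> Ck k S (v j)" and i: "i < N"
  shows "Ck k S (F i)"
proof -
  obtain D where D: "D 0 = p" "\<forall>k. \<forall>s\<in>{0<..}. (D k has_real_derivative D (Suc k) s) (at s)"
    using ps unfolding smooth_real_def by auto
  have trm: "Ck k S (\<lambda>t. p (norm (x i t - x j t)) *\<^sub>R (v j t - v i t))" if j: "j < N" for j
  proof (cases "j = i")
    case True
    show ?thesis by (rule Ck_cong[OF Ck_const[of k S 0]]) (simp add: True)
  next
    case False
    have dxk: "Ck k S (\<lambda>t. x i t - x j t)" using IH i j Ck_diff by blast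
    have r0: "Ck k S (\<lambda>t. inner (x i t - x j t) (x i t - x j t))" by (rule Ck_inner[OF dxk dxk])
    have "Ck k S (\<lambda>t. (\<lambda>k s. (\<Prod>j<k. 1/2 - real j) * s powr (1/2 - real k)) 0 (inner (x i t - x j t) (x i t - x j t)))"
      by (rule Ck_comp[OF r0 _ smooth_half_powr])
         (use nc[of _ i j] False i j in auto)
    then have nk: "Ck k S (\<lambda>t. norm (x i t - x j t))"
      by (rule Ck_cong) (simp add: powr_half_sqrt norm_eq_sqrt_inner)
    have "Ck k S (\<lambda>t. D 0 (norm (x i t - x j t)))"
      by (rule Ck_comp[OF nk _ D(2)]) (use nc[of _ i j] False i j in auto)
    then have "Ck k S (\<lambda>t. p (norm (x i t - x j t)))" using D(1) by simp
    moreover have "Ck k S (\<lambda>t. v j t - v i t)" using IH i j Ck_diff by blast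
    ultimately show ?thesis by (rule Ck_scaleR)
  qed
  have "Ck k S (\<lambda>t. (1 / real N) *\<^sub>R (\<Sum>j<N. p (norm (x i t - x j t)) *\<^sub>R (v j t - v i t)))"
    by (rule Ck_scaleR[OF Ck_const Ck_sum]) (use trm in auto)
  then show ?thesis unfolding F_def[abs_def] by simp
qed

lemma Ck_sys:
  assumes ps: "smooth_real {0<..} p" and S: "S \<subseteq> {0..T}"
    and nc: "\<And>s i j. s \<in> S \<Longrightarrow> i < N \<Longrightarrow> j < N \<Longrightarrow> i \<noteq> j \<Longrightarrow> norm (x i s - x j s) > 0"
  shows "i < N \<Longrightarrow> Ck k S (x i) \<and> Ck k S (v i)"
proof (induction k arbitrary: i)
  case 0 then show ?case by simp
next
  case (Suc k)
  have "\<forall>t\<in>S. (x i has_vector_derivative v i t) (at t within S)"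
    using dx[OF Suc.prems] S has_vector_derivative_within_subset by blast
  moreover have "\<forall>t\<in>S. (v i has_vector_derivative F i t) (at t within S)"
    using dv[OF Suc.prems] S has_vector_derivative_within_subset by blast
  moreover have "Ck k S (F i)" by (rule Ck_F[OF ps nc Suc.IH Suc.prems]) auto
  ultimately show ?case using Suc.IH[OF Suc.prems] by auto
qed

lemma smooth_item:
  assumes ps: "smooth_real {0<..} p" and t: "t \<in> {0..T}"
    and nct: "\<forall>i<N. \<forall>j<N. i \<noteq> j \<longrightarrow> norm (x i t - x j t) > 0"
  shows "\<exists>e>0. \<forall>i<N. C_inf_on ({t - e .. t + e} \<inter> {0..T}) (x i)"
proof -
  define A where "A = {(i, j). i < N \<and> j < N \<and> i \<noteq> j}"
  have fA: "finite A" unfolding A_def by (rule finite_subset[of _ "{..<N} \<times> {..<N}"]) auto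
  have "\<forall>ij\<in>A. eventually (\<lambda>s. norm (x (fst ij) s - x (snd ij) s) > 0) (at t within {0..T})"
  proof
    fix ij assume "ij \<in> A"
    then obtain i j where ij: "ij = (i, j)" "i < N" "j < N" "i \<noteq> j" unfolding A_def by auto
    have ci: "continuous (at t within {0..T}) (x i)" "continuous (at t within {0..T}) (x j)"
      using dx[OF ij(2) t] dx[OF ij(3) t] has_vector_derivative_continuous by blast+
    have "((\<lambda>s. norm (x i s - x j s)) \<longlongrightarrow> norm (x i t - x j t)) (at t within {0..T})"
      by (intro tendsto_intros) (use ci in \<open>auto simp: continuous_within\<close>)
    then have "eventually (\<lambda>s. norm (x i s - x j s) > 0) (at t within {0..T})"
      by (rule order_tendstoD(1)) (use nct ij in auto)
    then show "eventually (\<lambda>s. norm (x (fst ij) s - x (snd ij) s) > 0) (at t within {0..T})"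
      using ij by simp
  qed
  from eventually_ball_finite[OF fA this]
  obtain d where d: "d > 0" "\<And>s. s \<in> {0..T} \<Longrightarrow> s \<noteq> t \<Longrightarrow> dist s t < d \<Longrightarrow>
      \<forall>ij\<in>A. norm (x (fst ij) s - x (snd ij) s) > 0"
    unfolding eventually_at by blast
  define e where "e = d / 2"
  define S where "S = {t - e .. t + e} \<inter> {0..T}"
  have e: "e > 0" using d e_def by auto
  have S0: "S \<subseteq> {0..T}" unfolding S_def by auto
  have ncS: "norm (x i s - x j s) > 0" if "s \<in> S" "i < N" "j < N" "i \<noteq> j" for s i j
  proof (cases "s = t")
    case True then show ?thesis using nct that by auto
  next
    case False
    have "dist s t < d" using that(1) d(1) unfolding S_def e_def dist_real_def by (auto simp: abs_if)
    then show ?thesis using d(2)[of s] False that S0 unfolding A_def by auto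
  qed
  have ab: "max (t - e) 0 < min (t + e) T" using t e Tpos by auto
  have nb: "at s within S \<noteq> bot" if "s \<in> S" for s
  proof -
    have "S = {max (t - e) 0 .. min (t + e) T}" unfolding S_def by simp
    then have "s islimpt S" using islimpt_Icc[OF ab] that by simp
    then show ?thesis using trivial_limit_within[of s S] trivial_limit_def by auto
  qed
  have "C_inf_on S (x i)" if "i < N" for i
    by (rule Ck_all_imp_C_inf[OF nb]) (use Ck_sys[OF ps S0 ncS that] in auto)
  then show ?thesis using e unfolding S_def by blast
qed

end

context cs begin

lemma dF_bound:
  assumes lip: "\<And>a b. 0 \<le> a \<Longrightarrow> 0 \<le> b \<Longrightarrow> a \<le> R \<Longrightarrow> b \<le> R \<Longrightarrow> \<bar>p a - p b\<bar> \<le> L * \<bar>a - b\<bar>"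
    and xR: "\<And>k. k < N \<Longrightarrow> norm (x k s) \<le> R / 2"
    and vM: "\<And>k. k < N \<Longrightarrow> norm (v k s) \<le> M"
    and pK: "\<And>s. s \<ge> 0 \<Longrightarrow> p s \<le> K" and L: "L \<ge> 0"
    and i: "i < N" and j: "j < N"
  shows "norm (F i s - F j s) \<le> 2 * M * L * norm (x i s - x j s) + K * norm (v i s - v j s)"
proof -
  define a where "a = norm (x i s - x j s)"
  define b where "b = norm (v i s - v j s)"
  have trm: "norm (p (norm (x i s - x k s)) *\<^sub>R (v k s - v i s) - p (norm (x j s - x k s)) *\<^sub>R (v k s - v j s))
      \<le> 2 * M * L * a + K * b" if k: "k < N" for k
  proof -
    let ?pi = "p (norm (x i s - x k s))" and ?pj = "p (norm (x j s - x k s))"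
    have eq: "?pi *\<^sub>R (v k s - v i s) - ?pj *\<^sub>R (v k s - v j s) = (?pi - ?pj) *\<^sub>R (v k s - v i s) + ?pj *\<^sub>R (v j s - v i s)"
      by (simp add: scaleR_diff_left scaleR_diff_right)
    have d1: "norm (x i s - x k s) \<le> R" using norm_triangle_ineq4[of "x i s" "x k s"] xR[OF i] xR[OF k] by auto
    have d2: "norm (x j s - x k s) \<le> R" using norm_triangle_ineq4[of "x j s" "x k s"] xR[OF j] xR[OF k] by auto
    have "\<bar>?pi - ?pj\<bar> \<le> L * \<bar>norm (x i s - x k s) - norm (x j s - x k s)\<bar>"
      by (rule lip) (use d1 d2 in auto)
    also have "\<dots> \<le> L * a"
      using norm_triangle_ineq3[of "x i s - x k s" "x j s - x k s"] L unfolding a_def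
      by (intro mult_left_mono) auto
    finally have pd: "\<bar>?pi - ?pj\<bar> \<le> L * a" .
    have vk: "norm (v k s - v i s) \<le> 2 * M"
      using norm_triangle_ineq4[of "v k s" "v i s"] vM[OF k] vM[OF i] by auto
    have "norm ((?pi - ?pj) *\<^sub>R (v k s - v i s)) \<le> L * a * (2 * M)"
      using pd vk by (simp add: mult_mono')
    moreover have "norm (?pj *\<^sub>R (v j s - v i s)) \<le> K * b"
      using pnn[of "norm (x j s - x k s)"] pK[of "norm (x j s - x k s)"] unfolding b_def
      by (simp add: norm_minus_commute mult_right_mono)
    ultimately show ?thesis unfolding eq using norm_triangle_ineq[of "(?pi - ?pj) *\<^sub>R (v k s - v i s)" "?pj *\<^sub>R (v j s - v i s)"]
      by (simp add: algebra_simps)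
  qed
  have "F i s - F j s = (1 / real N) *\<^sub>R (\<Sum>k<N. p (norm (x i s - x k s)) *\<^sub>R (v k s - v i s) - p (norm (x j s - x k s)) *\<^sub>R (v k s - v j s))"
    unfolding F_def by (simp add: sum_subtractf scaleR_diff_right)
  also have "norm \<dots> \<le> (1 / real N) * (\<Sum>k<N. 2 * M * L * a + K * b)"
  proof -
    have "norm (\<Sum>k<N. p (norm (x i s - x k s)) *\<^sub>R (v k s - v i s) - p (norm (x j s - x k s)) *\<^sub>R (v k s - v j s))
        \<le> (\<Sum>k<N. 2 * M * L * a + K * b)"
      by (rule order.trans[OF norm_sum sum_mono]) (rule trm, simp)
    then show ?thesis unfolding norm_scaleR using Npos by (intro mult_mono) auto
  qed
  also have "\<dots> = 2 * M * L * a + K * b" using Npos by simp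
  finally show ?thesis unfolding a_def b_def .
qed

lemma stick:
  assumes lip: "\<And>a b. 0 \<le> a \<Longrightarrow> 0 \<le> b \<Longrightarrow> a \<le> R \<Longrightarrow> b \<le> R \<Longrightarrow> \<bar>p a - p b\<bar> \<le> L * \<bar>a - b\<bar>"
    and xR: "\<And>k s. k < N \<Longrightarrow> s \<in> {0..T} \<Longrightarrow> norm (x k s) \<le> R / 2"
    and vM: "\<And>k s. k < N \<Longrightarrow> s \<in> {0..T} \<Longrightarrow> norm (v k s) \<le> M"
    and pK: "\<And>s. s \<ge> 0 \<Longrightarrow> p s \<le> K" and L: "L \<ge> 0"
    and i: "i < N" and j: "j < N" and t0: "t0 \<in> {0..T}"
    and eqx: "x i t0 = x j t0" and eqv: "v i t0 = v j t0" and s: "s \<in> {t0..T}"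
  shows "x i s = x j s"
proof -
  have M: "M \<ge> 0" using vM[OF i t0] norm_ge_zero order.trans by blast
  have K: "K \<ge> 0" using pK[of 0] pnn[of 0] by simp
  define C where "C = 1 + 2 * M * L + 2 * K"
  define u where "u s = inner (x i s - x j s) (x i s - x j s) + inner (v i s - v j s) (v i s - v j s)" for s
  define u' where "u' s = (inner (x i s - x j s) (v i s - v j s) + inner (v i s - v j s) (x i s - x j s))
     + (inner (v i s - v j s) (F i s - F j s) + inner (F i s - F j s) (v i s - v j s))" for s
  define w where "w s = u s * exp (- C * s)" for s
  have hu: "(u has_real_derivative u' s) (at s within {0..T})" if s: "s \<in> {0..T}" for s
    unfolding has_real_derivative_iff_has_vector_derivative u_def[abs_def] u'_def
    by (intro has_vector_derivative_add bounded_bilinear.has_vector_derivative[OF bounded_bilinear_inner]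
          has_vector_derivative_diff dx dv i j s)
  have ub: "u' s \<le> C * u s" if s: "s \<in> {0..T}" for s
  proof -
    define a where "a = norm (x i s - x j s)"
    define b where "b = norm (v i s - v j s)"
    have a0: "a \<ge> 0" and b0: "b \<ge> 0" unfolding a_def b_def by auto
    have uab: "u s = a^2 + b^2" unfolding u_def a_def b_def by (simp add: power2_norm_eq_inner)
    have dF: "norm (F i s - F j s) \<le> 2 * M * L * a + K * b"
      unfolding a_def b_def by (rule dF_bound[OF lip xR vM pK L i j]) (use s in auto)
    have i1: "inner (x i s - x j s) (v i s - v j s) \<le> a * b"
      unfolding a_def b_def by (rule norm_cauchy_schwarz)
    have i2: "inner (v i s - v j s) (F i s - F j s) \<le> b * (2 * M * L * a + K * b)"
      using norm_cauchy_schwarz[of "v i s - v j s" "F i s - F j s"] dF b0 unfolding b_def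
      by (meson mult_left_mono norm_ge_zero order.trans)
    have "u' s \<le> 2 * (a * b) + 2 * (b * (2 * M * L * a + K * b))"
      unfolding u'_def using i1 i2 by (simp add: inner_commute)
    also have "\<dots> \<le> C * (a^2 + b^2)"
    proof -
      have sq: "0 \<le> (a - b)^2" by simp
      have ab2: "2 * (a * b) \<le> a^2 + b^2" using sq unfolding power2_diff by linarith
      have f2: "2 * (M * L) * (2 * (a * b)) \<le> 2 * (M * L) * (a^2 + b^2)"
        by (rule mult_left_mono[OF ab2]) (use M L in simp)
      have f3: "2 * K * b^2 \<le> 2 * K * (a^2 + b^2)"
        by (rule mult_left_mono) (use K in simp_all)
      have e1: "2 * (a * b) + 2 * (b * (2 * M * L * a + K * b)) = 2 * (a * b) + 2 * (M * L) * (2 * (a * b)) + 2 * K * b^2"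
        by (simp add: algebra_simps power2_eq_square)
      have e2: "C * (a^2 + b^2) = (a^2 + b^2) + 2 * (M * L) * (a^2 + b^2) + 2 * K * (a^2 + b^2)"
        unfolding C_def by (simp add: algebra_simps)
      show ?thesis unfolding e1 e2 using ab2 f2 f3 by linarith
    qed
    finally show ?thesis using uab by simp
  qed
  have hw: "(w has_real_derivative (u' s * exp (- C * s) - C * (u s * exp (- C * s)))) (at s within {0..T})"
    if s: "s \<in> {0..T}" for s
  proof -
    have he: "((\<lambda>s. exp (- C * s)) has_real_derivative exp (- C * s) * (- C)) (at s within {0..T})"
      by (rule DERIV_chain2[OF DERIV_exp]) (auto intro!: derivative_eq_intros)
    have "((\<lambda>s. u s * exp (- C * s)) has_real_derivative (u' s * exp (- C * s) + exp (- C * s) * (- C) * u s)) (at s within {0..T})"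
      by (rule DERIV_mult[OF hu[OF s] he])
    moreover have "u' s * exp (- C * s) + exp (- C * s) * (- C) * u s = u' s * exp (- C * s) - C * (u s * exp (- C * s))"
      by (simp add: algebra_simps)
    ultimately show ?thesis unfolding w_def[abs_def] by metis
  qed
  have "w s \<le> w t0"
  proof (rule deriv_nonpos_mono[OF hw])
    fix r assume r: "r \<in> {0..T}"
    show "u' r * exp (- C * r) - C * (u r * exp (- C * r)) \<le> 0"
      using ub[OF r] by (simp add: algebra_simps mult_right_mono)
  qed (use t0 s in auto)
  moreover have "w t0 = 0" unfolding w_def u_def using eqx eqv by simp
  ultimately have "u s \<le> 0" unfolding w_def by (simp add: mult_le_0_iff)
  moreover have "inner (v i s - v j s) (v i s - v j s) \<ge> 0" by simp
  ultimately have "inner (x i s - x j s) (x i s - x j s) \<le> 0" unfolding u_def by linarith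
  then have "x i s - x j s = 0" by (metis inner_eq_zero_iff inner_ge_zero order.antisym)
  then show ?thesis by simp
qed

end

context
  fixes \<alpha> :: real and n :: nat and p :: "real \<Rightarrow> real"
  assumes al: "0 < \<alpha>" and n2: "n \<ge> 2" and pt: "psi_trunc \<alpha> n p"
begin

lemma pt_nonneg: "s \<ge> 0 \<Longrightarrow> p s \<ge> 0"
  using pt unfolding psi_trunc_def by auto

lemma pt_const: "0 \<le> s \<Longrightarrow> s \<le> real n powr (-1/\<alpha>) \<Longrightarrow> p s = real n"
  using pt unfolding psi_trunc_def by auto

lemma pt_bound: "s \<ge> 0 \<Longrightarrow> p s \<le> real n"
proof -
  assume s0: "s \<ge> 0"
  define a0 where "a0 = real n powr (-1/\<alpha>)"
  define c where "c = real (n - 1) powr (-1/\<alpha>)"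
  have n1: "real (n - 1) \<ge> 1" using n2 by auto
  have c0: "c > 0" unfolding c_def using n1 by simp
  have tail: "p r = r powr (-\<alpha>)" if "c \<le> r" for r
  proof -
    have "p r = psi \<alpha> r" using pt that unfolding psi_trunc_def c_def by auto
    then show ?thesis using that c0 unfolding psi_def by auto
  qed
  have pc: "c powr (-\<alpha>) = real (n - 1)"
    unfolding c_def using al n1 by (simp add: powr_powr)
  have tailb: "p r \<le> real n" if "c \<le> r" for r
  proof -
    have "r powr (-\<alpha>) \<le> c powr (-\<alpha>)" by (rule powr_mono2') (use al c0 that in auto)
    then show ?thesis using tail[OF that] pc by simp
  qed
  show "p s \<le> real n"
  proof (cases "s \<le> a0")
    case True then show ?thesis using pt_const s0 unfolding a0_def by simp
  next
    case False
    show ?thesis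
    proof (cases "c \<le> s")
      case True then show ?thesis using tailb by simp
    next
      case nc: False
      have mem: "s \<in> {a0..c}" "a0 \<in> {a0..c}" "c \<in> {a0..c}" using False nc by auto
      have mono: "monotone_on {a0..c} (\<le>) (\<le>) p \<or> monotone_on {a0..c} (\<le>) (\<ge>) p"
        using pt unfolding psi_trunc_def a0_def c_def by auto
      have pa0: "p a0 = real n" using pt_const[of a0] unfolding a0_def by simp
      from mono show ?thesis
      proof
        assume "monotone_on {a0..c} (\<le>) (\<le>) p"
        then have "p s \<le> p c" using mem nc unfolding monotone_on_def by auto
        then show ?thesis using tailb[of c] by simp
      next
        assume "monotone_on {a0..c} (\<le>) (\<ge>) p"
        then have "p s \<le> p a0" using mem False unfolding monotone_on_def by auto
        then show ?thesis using pa0 by simp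
      qed
    qed
  qed
qed

lemma pt_smooth: "smooth_real {0<..} p"
proof -
  obtain D where D: "D 0 = p" "\<forall>k. \<forall>t\<in>{0<..}. (D k has_vector_derivative D (Suc k) t) (at t within {0<..})"
    using pt unfolding psi_trunc_def C_inf_on_def by auto
  have "\<forall>k. \<forall>s\<in>{0<..}. (D k has_real_derivative D (Suc k) s) (at s)"
    using D(2) by (simp add: has_real_derivative_iff_has_vector_derivative at_within_open[OF _ open_greaterThan])
  then show ?thesis unfolding smooth_real_def using D(1) by auto
qed

lemma pt_lip: "\<exists>L\<ge>0. \<forall>a b. 0 \<le> a \<longrightarrow> 0 \<le> b \<longrightarrow> a \<le> R \<longrightarrow> b \<le> R \<longrightarrow> \<bar>p a - p b\<bar> \<le> L * \<bar>a - b\<bar>"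
proof -
  define a0 where "a0 = real n powr (-1/\<alpha>)"
  have a0: "a0 > 0" unfolding a0_def using n2 by simp
  obtain D where D: "D 0 = p" "\<forall>k. \<forall>s\<in>{0<..}. (D k has_real_derivative D (Suc k) s) (at s)"
    using pt_smooth unfolding smooth_real_def by auto
  define R' where "R' = max R a0"
  have D12: "(D 1 has_vector_derivative D 2 s) (at s)" if "s > 0" for s
  proof -
    have "(D 1 has_real_derivative D (Suc 1) s) (at s)" using D(2) that by blast
    then show ?thesis by (simp add: has_real_derivative_iff_has_vector_derivative numeral_2_eq_2)
  qed
  have "continuous_on {a0/2..R'} (D 1)"
    by (rule continuous_on_vector_derivative[of _ _ "D 2"])
       (use D12 a0 in \<open>auto intro: has_vector_derivative_at_within\<close>)
  then have "bounded (D 1 ` {a0/2..R'})" by (intro compact_imp_bounded compact_continuous_image) auto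
  then obtain B where B0: "\<forall>s\<in>{a0/2..R'}. \<bar>D 1 s\<bar> \<le> B" unfolding bounded_iff by auto
  then have B: "\<And>s. s \<in> {a0/2..R'} \<Longrightarrow> \<bar>D 1 s\<bar> \<le> B" by blast
  define L where "L = max B 0"
  have main: "\<bar>p a - p b\<bar> \<le> L * \<bar>a - b\<bar>" if ab: "0 \<le> a" "a \<le> b" "b \<le> R" for a b
  proof (cases "b \<le> a0")
    case True then show ?thesis using pt_const[of a] pt_const[of b] ab unfolding a0_def L_def by simp
  next
    case False
    define a' where "a' = max a (a0/2)"
    have pc0: "\<And>s. 0 \<le> s \<Longrightarrow> s \<le> a0 \<Longrightarrow> p s = real n" using pt_const unfolding a0_def by blast
    have pa: "p a = p a'"
    proof (cases "a \<le> a0/2")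
      case True
      then have "a' = a0/2" unfolding a'_def by auto
      then show ?thesis using pc0[of a] pc0[of "a0/2"] True ab a0 by auto
    next
      case False then show ?thesis unfolding a'_def by auto
    qed
    have a'b: "a' \<le> b" using False a0 ab unfolding a'_def by auto
    have "\<exists>y\<in>{a'..b}. p b - p a' = (\<lambda>h. h * D 1 y) (b - a')"
    proof (rule mvt_very_simple[OF a'b])
      fix y assume y: "a' \<le> y" "y \<le> b"
      have "y > 0" using y a0 unfolding a'_def by auto
      then have "(p has_real_derivative D 1 y) (at y)" using D by (metis One_nat_def greaterThan_iff)
      then have "(p has_real_derivative D 1 y) (at y within {a'..b})" by (rule has_field_derivative_at_within)
      then show "(p has_derivative (\<lambda>h. h * D 1 y)) (at y within {a'..b})"
        unfolding has_field_derivative_def by (metis (no_types, lifting) ext mult.commute)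
    qed
    then obtain y where y: "y \<in> {a'..b}" "p b - p a' = (b - a') * D 1 y" by auto
    have "y \<in> {a0/2..R'}" using y ab unfolding a'_def R'_def by auto
    then have "\<bar>D 1 y\<bar> \<le> L" using B unfolding L_def by force
    then have "\<bar>p b - p a'\<bar> \<le> (b - a') * L" using y a'b by (simp add: abs_mult mult_left_mono)
    also have "\<dots> \<le> (b - a) * L" using ab unfolding a'_def L_def by (simp add: mult_right_mono)
    finally show ?thesis using pa ab by (simp add: abs_minus_commute mult.commute)
  qed
  have "\<bar>p a - p b\<bar> \<le> L * \<bar>a - b\<bar>" if "0 \<le> a" "0 \<le> b" "a \<le> R" "b \<le> R" for a b
  proof (cases "a \<le> b")
    case True then show ?thesis using main that by auto
  next
    case False then show ?thesis using main[of b a] that by (simp add: abs_minus_commute)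
  qed
  moreover have "L \<ge> 0" unfolding L_def by simp
  ultimately show ?thesis by blast
qed

end

lemma (in cs) x_bounded: "\<exists>R. \<forall>i<N. \<forall>s\<in>{0..T}. norm (x i s) \<le> R"
proof -
  have "compact (\<Union>i<N. x i ` {0..T})"
  proof (rule compact_UN)
    fix i assume i: "i \<in> {..<N}"
    have "continuous_on {0..T} (x i)"
      by (rule continuous_on_vector_derivative) (use dx i in auto)
    then show "compact (x i ` {0..T})" by (intro compact_continuous_image) auto
  qed simp
  then have "bounded (\<Union>i<N. x i ` {0..T})" by (rule compact_imp_bounded)
  then obtain R where "\<forall>y\<in>(\<Union>i<N. x i ` {0..T}). norm y \<le> R" unfolding bounded_iff by blast
  then show ?thesis by auto
qed

theorem proposition2p2:
  fixes \<alpha> T :: real and N :: nat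
    and \<psi>n :: "nat \<Rightarrow> real \<Rightarrow> real"
    and x v :: "nat \<Rightarrow> nat \<Rightarrow> real \<Rightarrow> real^'d"
  assumes "0 < \<alpha>" "\<alpha> < 1" "N \<ge> 1" "T > 0"
    and "\<And>n. n \<ge> 2 \<Longrightarrow> psi_trunc \<alpha> n (\<psi>n n)"
    and "\<And>n. n \<ge> 2 \<Longrightarrow> CS_solution N (\<psi>n n) T (x n) (v n)"
  shows
    "(\<forall>n\<ge>2.
       \<comment> \<open>1. smoothness away from collisions\<close>
       (\<forall>t\<in>{0..T}. (\<forall>i<N. \<forall>j<N. i \<noteq> j \<longrightarrow> norm (x n i t - x n j t) > 0) \<longrightarrow>
          (\<exists>e>0. \<forall>i<N. C_inf_on ({t - e .. t + e} \<inter> {0..T}) (x n i))) \<and>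
       \<comment> \<open>2. conservation of the average velocity\<close>
       (\<forall>t\<in>{0..T}. (1 / real N) *\<^sub>R (\<Sum>i<N. v n i t) = (1 / real N) *\<^sub>R (\<Sum>i<N. v n i 0)) \<and>
       \<comment> \<open>3. and 5. velocity bound M(n) and acceleration bound 2 M(n) n\<close>
       (\<exists>M. (\<forall>i<N. \<forall>t\<in>{0..T}. norm (v n i t) \<le> M) \<and>
            (\<forall>i<N. \<forall>t\<in>{0..T}.
               norm (vector_derivative (v n i) (at t within {0..T})) \<le> 2 * M * real n)) \<and>
       \<comment> \<open>6. sticking of particles\<close>
       (\<forall>t\<in>{0..T}. \<forall>i<N. \<forall>j<N. x n i t = x n j t \<and> v n i t = v n j t \<longrightarrow>
          (\<forall>s\<in>{t..T}. x n i s = x n j s)) \<and>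
       \<comment> \<open>7. flocked state persists\<close>
       (\<forall>t\<in>{0..T}. (\<forall>i<N. \<forall>j<N. v n i t = v n j t) \<longrightarrow>
          (\<forall>s\<in>{t..T}. \<forall>i<N. v n i s = v n i t))) \<and>
     \<comment> \<open>4. uniform velocity bound under uniformly bounded initial data\<close>
     ((\<exists>B. \<forall>n\<ge>2. \<forall>i<N. norm (x n i 0) \<le> B \<and> norm (v n i 0) \<le> B) \<longrightarrow>
        (\<exists>M. \<forall>n\<ge>2. \<forall>i<N. \<forall>t\<in>{0..T}. norm (v n i t) \<le> M))"
proof -
  note al = assms(1) and Npos = assms(3) and Tpos = assms(4) and pt = assms(5) and sol = assms(6)
  have cs: "cs N (\<psi>n n) T (x n) (v n)" if n: "n \<ge> 2" for n
    by unfold_locales (use sol[OF n] Tpos Npos pt_nonneg[OF al n pt[OF n]] in auto)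
  have part1: "(\<forall>t\<in>{0..T}. (\<forall>i<N. \<forall>j<N. i \<noteq> j \<longrightarrow> norm (x n i t - x n j t) > 0) \<longrightarrow>
          (\<exists>e>0. \<forall>i<N. C_inf_on ({t - e .. t + e} \<inter> {0..T}) (x n i))) \<and>
       (\<forall>t\<in>{0..T}. (1 / real N) *\<^sub>R (\<Sum>i<N. v n i t) = (1 / real N) *\<^sub>R (\<Sum>i<N. v n i 0)) \<and>
       (\<exists>M. (\<forall>i<N. \<forall>t\<in>{0..T}. norm (v n i t) \<le> M) \<and>
            (\<forall>i<N. \<forall>t\<in>{0..T}.
               norm (vector_derivative (v n i) (at t within {0..T})) \<le> 2 * M * real n)) \<and>
       (\<forall>t\<in>{0..T}. \<forall>i<N. \<forall>j<N. x n i t = x n j t \<and> v n i t = v n j t \<longrightarrow>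
          (\<forall>s\<in>{t..T}. x n i s = x n j s)) \<and>
       (\<forall>t\<in>{0..T}. (\<forall>i<N. \<forall>j<N. v n i t = v n j t) \<longrightarrow>
          (\<forall>s\<in>{t..T}. \<forall>i<N. v n i s = v n i t))" if n: "n \<ge> 2" for n
  proof -
    interpret c: cs N "\<psi>n n" T "x n" "v n" by (rule cs[OF n])
    have ptn: "psi_trunc \<alpha> n (\<psi>n n)" by (rule pt[OF n])
    define M where "M = sqrt (c.E 0)"
    have vM: "\<And>i t. i < N \<Longrightarrow> t \<in> {0..T} \<Longrightarrow> norm (v n i t) \<le> M"
      unfolding M_def by (rule c.v_bound)
    have pK: "\<And>s. s \<ge> 0 \<Longrightarrow> \<psi>n n s \<le> real n" by (rule pt_bound[OF al n ptn])
    have i1: "\<forall>t\<in>{0..T}. (\<forall>i<N. \<forall>j<N. i \<noteq> j \<longrightarrow> norm (x n i t - x n j t) > 0) \<longrightarrow>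
          (\<exists>e>0. \<forall>i<N. C_inf_on ({t - e .. t + e} \<inter> {0..T}) (x n i))"
      by (intro ballI impI) (rule c.smooth_item[OF pt_smooth[OF al n ptn]])
    have i2: "\<forall>t\<in>{0..T}. (1 / real N) *\<^sub>R (\<Sum>i<N. v n i t) = (1 / real N) *\<^sub>R (\<Sum>i<N. v n i 0)"
    proof
      fix t :: real assume t: "t \<in> {0..T}"
      show "(1 / real N) *\<^sub>R (\<Sum>i<N. v n i t) = (1 / real N) *\<^sub>R (\<Sum>i<N. v n i 0)"
        by (subst c.avg_const[OF t]) (rule refl)
    qed
    have i35: "\<forall>i<N. \<forall>t\<in>{0..T}. norm (vector_derivative (v n i) (at t within {0..T})) \<le> 2 * M * real n"
    proof (intro allI impI ballI)
      fix i t assume i: "i < N" and t: "t \<in> {0..T}"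
      have "vector_derivative (v n i) (at t within {0..T}) = c.F i t"
        by (rule vector_derivative_within_closed_interval[OF Tpos t c.dv[OF i t]])
      moreover have "norm (c.F i t) \<le> 2 * M * real n"
        by (rule c.F_bound[OF pK _ i]) (use vM t in auto)
      ultimately show "norm (vector_derivative (v n i) (at t within {0..T})) \<le> 2 * M * real n" by simp
    qed
    obtain Rx where Rx: "\<forall>i<N. \<forall>s\<in>{0..T}. norm (x n i s) \<le> Rx" using c.x_bounded by blast
    obtain L where L: "L \<ge> 0" "\<forall>a b. 0 \<le> a \<longrightarrow> 0 \<le> b \<longrightarrow> a \<le> 2 * Rx \<longrightarrow> b \<le> 2 * Rx \<longrightarrow>
        \<bar>\<psi>n n a - \<psi>n n b\<bar> \<le> L * \<bar>a - b\<bar>"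
      using pt_lip[OF al n ptn, of "2 * Rx"] by blast
    have i6: "\<forall>t\<in>{0..T}. \<forall>i<N. \<forall>j<N. x n i t = x n j t \<and> v n i t = v n j t \<longrightarrow>
          (\<forall>s\<in>{t..T}. x n i s = x n j s)"
    proof (intro ballI allI impI)
      fix t i j s assume t: "t \<in> {0..T}" and i: "i < N" and j: "j < N"
        and e: "x n i t = x n j t \<and> v n i t = v n j t" and s: "s \<in> {t..T}"
      show "x n i s = x n j s"
        by (rule c.stick[of "2 * Rx" L M "real n" i j t s]) (use L Rx vM pK i j t e s in auto)
    qed
    have i7: "\<forall>t\<in>{0..T}. (\<forall>i<N. \<forall>j<N. v n i t = v n j t) \<longrightarrow>
          (\<forall>s\<in>{t..T}. \<forall>i<N. v n i s = v n i t)"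
    proof (intro ballI impI allI)
      fix t s i assume t: "t \<in> {0..T}" and eq: "\<forall>i<N. \<forall>j<N. v n i t = v n j t" and s: "s \<in> {t..T}" and i: "i < N"
      show "v n i s = v n i t" by (rule c.flock[OF t _ s i]) (use eq in blast)
    qed
    have i3: "\<exists>M. (\<forall>i<N. \<forall>t\<in>{0..T}. norm (v n i t) \<le> M) \<and>
            (\<forall>i<N. \<forall>t\<in>{0..T}. norm (vector_derivative (v n i) (at t within {0..T})) \<le> 2 * M * real n)"
      by (rule exI[of _ M]) (use vM i35 in auto)
    show ?thesis using i1 i2 i3 i6 i7 by (intro conjI)
  qed
  have part2: "\<exists>M. \<forall>n\<ge>2. \<forall>i<N. \<forall>t\<in>{0..T}. norm (v n i t) \<le> M"
    if hB: "\<exists>B. \<forall>n\<ge>2. \<forall>i<N. norm (x n i 0) \<le> B \<and> norm (v n i 0) \<le> B"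
  proof -
    obtain B where B: "\<forall>n\<ge>2. \<forall>i<N. norm (x n i 0) \<le> B \<and> norm (v n i 0) \<le> B" using hB by blast
    have "norm (v n i t) \<le> sqrt (real N * B^2)" if n: "n \<ge> 2" and i: "i < N" and t: "t \<in> {0..T}" for n i t
    proof -
      interpret c: cs N "\<psi>n n" T "x n" "v n" by (rule cs[OF n])
      have "norm (v n i t) \<le> sqrt (c.E 0)" by (rule c.v_bound[OF i t])
      also have "\<dots> \<le> sqrt (real N * B^2)"
        using c.E0_bound[of B] B n by (intro real_sqrt_le_mono) auto
      finally show ?thesis .
    qed
    then show ?thesis by blast
  qed
  show ?thesis
    apply (rule conjI)
     apply (rule allI, rule impI, erule part1)
    apply (rule impI, erule part2)
    done
qed

end
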